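(* A tree $T$ that has a vertex $v$ with $\deg(v)\geq 4$, or two distinct vertices $u,v$ with $\deg(u)\geq 3$ and $\deg(v)\geq 3$, is not in $\mathcal{G}^{\rm SSP}$.
   Context: All graphs are finite, simple, undirected. For a graph $G$ on $\{1,\ldots,n\}$, $\mathcal{S}(G)$ is the set of real symmetric $n\times n$ matrices $A=(a_{ij})$ with $a_{ij}\neq0$ iff $\{i,j\}\in E(G)$ for $i\neq j$ (diagonal arbitrary). A real symmetric $A$ has the strong spectral property (SSP) if the only real symmetric $X$ with $A\circ X=0$, $I\circ X=0$, $AX-XA=0$ is $X=0$ ($\circ$ = entrywise product). $\mathcal{G}^{\rm SSP}$ is the set of graphs $G$ such that every matrix in $\mathcal{S}(G)$ has the SSP. *)

theory Defs
  imports "HOL-Analysis.Analysis"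
begin

definition simple_graph :: "('n::finite \<Rightarrow> 'n \<Rightarrow> bool) \<Rightarrow> bool" where
  "simple_graph E \<longleftrightarrow> (\<forall>u v. E u v \<longleftrightarrow> E v u) \<and> (\<forall>v. \<not> E v v)"

definition graph_connected :: "('n::finite \<Rightarrow> 'n \<Rightarrow> bool) \<Rightarrow> bool" where
  "graph_connected E \<longleftrightarrow> (\<forall>u v. E\<^sup>*\<^sup>* u v)"

definition is_cycle :: "('n::finite \<Rightarrow> 'n \<Rightarrow> bool) \<Rightarrow> 'n list \<Rightarrow> bool" where
  "is_cycle E vs \<longleftrightarrow> length vs \<ge> 3 \<and> distinct vs
     \<and> (\<forall>i. Suc i < length vs \<longrightarrow> E (vs ! i) (vs ! Suc i))
     \<and> E (last vs) (hd vs)"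

definition acyclic_graph :: "('n::finite \<Rightarrow> 'n \<Rightarrow> bool) \<Rightarrow> bool" where
  "acyclic_graph E \<longleftrightarrow> (\<nexists>vs. is_cycle E vs)"

definition is_tree :: "('n::finite \<Rightarrow> 'n \<Rightarrow> bool) \<Rightarrow> bool" where
  "is_tree E \<longleftrightarrow> simple_graph E \<and> graph_connected E \<and> acyclic_graph E"

definition degree :: "('n::finite \<Rightarrow> 'n \<Rightarrow> bool) \<Rightarrow> 'n \<Rightarrow> nat" where
  "degree E v = card {u. E v u}"

definition symmetric_mat :: "real^'n^'n \<Rightarrow> bool" where
  "symmetric_mat A \<longleftrightarrow> transpose A = A"

definition S_graph :: "('n::finite \<Rightarrow> 'n \<Rightarrow> bool) \<Rightarrow> (real^'n^'n) set" where
  "S_graph E = {A. symmetric_mat A \<and> (\<forall>i j. i \<noteq> j \<longrightarrow> (A $ i $ j \<noteq> 0 \<longleftrightarrow> E i j))}"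

definition SSP :: "real^'n^'n \<Rightarrow> bool" where
  "SSP A \<longleftrightarrow> (\<forall>X::real^'n^'n. symmetric_mat X
      \<and> (\<forall>i j. A $ i $ j * X $ i $ j = 0)
      \<and> (\<forall>i. X $ i $ i = 0)
      \<and> A ** X - X ** A = 0 \<longrightarrow> X = 0)"

definition in_G_SSP :: "('n::finite \<Rightarrow> 'n \<Rightarrow> bool) \<Rightarrow> bool" where
  "in_G_SSP E \<longleftrightarrow> (\<forall>A \<in> S_graph E. SSP A)"

end

theory Submission
  imports Defs "HOL-Library.Transitive_Closure_Table"
begin

definition Rr :: "('n::finite \<Rightarrow> 'n \<Rightarrow> bool) \<Rightarrow> 'n \<Rightarrow> 'n \<Rightarrow> 'n \<Rightarrow> bool" where
  "Rr E s = (\<lambda>p q. E p q \<and> p \<noteq> s \<and> q \<noteq> s)\<^sup>*\<^sup>*"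

lemma rpath_idx:
  "rtrancl_path r x xs y \<Longrightarrow>
   (\<forall>i. Suc i < length (x#xs) \<longrightarrow> r ((x#xs)!i) ((x#xs)!Suc i)) \<and> last (x#xs) = y"
proof (induction rule: rtrancl_path.induct)
  case (base x) then show ?case by simp
next
  case (step x y ys z)
  then show ?case
    by (auto simp: nth_Cons split: nat.splits)
qed

lemma rpath_set:
  "rtrancl_path r x xs y \<Longrightarrow> (\<forall>p q. r p q \<longrightarrow> q \<noteq> s) \<Longrightarrow> s \<notin> set xs"
  by (induction rule: rtrancl_path.induct) auto

lemma no_path:
  assumes T: "is_tree E" and sa: "E s a" and sb: "E s b" and ab: "a \<noteq> b"
  shows "\<not> Rr E s a b"
proof
  define P where "P = (\<lambda>p q. E p q \<and> p \<noteq> s \<and> q \<noteq> s)"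
  have sg: "simple_graph E" and ac: "acyclic_graph E" using T unfolding is_tree_def by auto
  assume "Rr E s a b"
  then obtain xs where "rtrancl_path P a xs b"
    unfolding Rr_def P_def rtranclp_eq_rtrancl_path by blast
  then obtain ys where p: "rtrancl_path P a ys b" and d: "distinct (a # ys)"
    by (rule rtrancl_path_distinct)
  have idx: "\<forall>i. Suc i < length (a#ys) \<longrightarrow> P ((a#ys)!i) ((a#ys)!Suc i)"
    and lst: "last (a#ys) = b" using rpath_idx[OF p] by auto
  have ns: "s \<notin> set ys" using rpath_set[OF p, of s] unfolding P_def by auto
  have as: "a \<noteq> s" using sa sg unfolding simple_graph_def by auto
  have ne: "ys \<noteq> []" using lst ab by auto
  have "is_cycle E (s # a # ys)"
    unfolding is_cycle_def
  proof (intro conjI allI impI)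
    show "3 \<le> length (s # a # ys)" using ne by (cases ys) auto
    show "distinct (s # a # ys)" using d ns as by auto
    show "E (last (s # a # ys)) (hd (s # a # ys))"
      using lst sb sg ne unfolding simple_graph_def by auto
  next
    fix i assume i: "Suc i < length (s # a # ys)"
    show "E ((s # a # ys) ! i) ((s # a # ys) ! Suc i)"
    proof (cases i)
      case 0 then show ?thesis using sa by simp
    next
      case (Suc k)
      then have "P ((a#ys)!k) ((a#ys)!Suc k)" using idx i by auto
      then show ?thesis using Suc unfolding P_def by simp
    qed
  qed
  then show False using ac unfolding acyclic_graph_def by blast
qed

lemma Rr_sym:
  assumes sg: "simple_graph E" and "Rr E s p q" shows "Rr E s q p"
proof -
  have "(\<lambda>p q. E p q \<and> p \<noteq> s \<and> q \<noteq> s)\<^sup>*\<^sup>* p q" using assms(2) unfolding Rr_def .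
  then show ?thesis unfolding Rr_def
  proof (induction rule: rtranclp_induct)
    case base then show ?case by simp
  next
    case (step y z)
    then have "E z y \<and> z \<noteq> s \<and> y \<noteq> s" using sg unfolding simple_graph_def by auto
    then show ?case using step.IH by (rule converse_rtranclp_into_rtranclp)
  qed
qed

lemma Rr_trans: "Rr E s p q \<Longrightarrow> Rr E s q r \<Longrightarrow> Rr E s p r"
  unfolding Rr_def by (rule rtranclp_trans)

lemma Rr_step: "Rr E s p q \<Longrightarrow> E q r \<Longrightarrow> q \<noteq> s \<Longrightarrow> r \<noteq> s \<Longrightarrow> Rr E s p r"
  unfolding Rr_def by (rule rtranclp.rtrancl_into_rtrancl) auto

lemma Rr_refl: "Rr E s p p" unfolding Rr_def by simp

lemma Rr_not_s: "Rr E s a w \<Longrightarrow> a \<noteq> s \<Longrightarrow> w \<noteq> s"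
  unfolding Rr_def by (induction rule: rtranclp_induct) auto

lemma Rr_transfer:
  assumes "Rr E v c w" "\<not> Rr E v c u" shows "Rr E u c w"
proof -
  have "(\<lambda>p q. E p q \<and> p \<noteq> v \<and> q \<noteq> v)\<^sup>*\<^sup>* c w" using assms(1) unfolding Rr_def .
  then show ?thesis
  proof (induction rule: rtranclp_induct)
    case base then show ?case by (rule Rr_refl)
  next
    case (step y z)
    have "Rr E v c y" using step(1) unfolding Rr_def .
    then have "Rr E v c z" using Rr_step step(2) by metis
    with \<open>Rr E v c y\<close> have "y \<noteq> u" "z \<noteq> u" using assms(2) by auto
    then show ?case using step Rr_step by metis
  qed
qed


lemma core:
  fixes A :: "real^'n::finite^'n" and x y :: "'n \<Rightarrow> real"
  assumes AS: "A \<in> S_graph E" and sg: "simple_graph E"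
    and Ax: "\<And>i. (\<Sum>k\<in>UNIV. A$i$k * x k) = 0"
    and Ay: "\<And>i. (\<Sum>k\<in>UNIV. A$i$k * y k) = 0"
    and xy: "\<And>i. x i * y i = 0"
    and exy: "\<And>i j. E i j \<Longrightarrow> x i * y j = 0"
    and x0: "x i0 \<noteq> 0" and y0: "y j0 \<noteq> 0"
  shows "\<not> SSP A"
proof
  assume ssp: "SSP A"
  define X :: "real^'n^'n" where "X = (\<chi> i j. x i * y j + y i * x j)"
  have symA: "A$i$j = A$j$i" for i j
  proof -
    have "transpose A = A" using AS by (simp add: S_graph_def symmetric_mat_def)
    then have "(transpose A)$j$i = A$j$i" by simp
    then show "A$i$j = A$j$i" by (simp add: transpose_def)
  qed
  have "symmetric_mat X" unfolding symmetric_mat_def transpose_def X_def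
    by (simp add: vec_eq_iff)
  moreover have "\<forall>i j. A $ i $ j * X $ i $ j = 0"
  proof (intro allI)
    fix i j
    show "A $ i $ j * X $ i $ j = 0"
    proof (cases "i = j")
      case True then show ?thesis using xy[of i] by (simp add: X_def mult.commute)
    next
      case False
      show ?thesis
      proof (cases "A$i$j = 0")
        case True then show ?thesis by simp
      next
        case F2: False
        then have "E i j" using AS False unfolding S_graph_def by auto
        then have "E j i" using sg unfolding simple_graph_def by auto
        then show ?thesis using exy[OF \<open>E i j\<close>] exy[OF \<open>E j i\<close>]
          by (auto simp: X_def)
      qed
    qed
  qed
  moreover have "\<forall>i. X $ i $ i = 0" using xy by (simp add: X_def mult.commute)
  moreover have "A ** X - X ** A = 0"
  proof -
    have "(A ** X) $ i $ j = 0" for i j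
    proof -
      have "(A ** X) $ i $ j = (\<Sum>k\<in>UNIV. A$i$k * (x k * y j + y k * x j))"
        by (simp add: matrix_matrix_mult_def X_def)
      also have "\<dots> = (\<Sum>k\<in>UNIV. A$i$k * x k) * y j + (\<Sum>k\<in>UNIV. A$i$k * y k) * x j"
        by (simp add: distrib_left sum.distrib sum_distrib_right mult.assoc)
      finally show ?thesis using Ax Ay by simp
    qed
    moreover have "(X ** A) $ i $ j = 0" for i j
    proof -
      have "(X ** A) $ i $ j = (\<Sum>k\<in>UNIV. (x i * y k + y i * x k) * A$k$j)"
        by (simp add: matrix_matrix_mult_def X_def)
      also have "\<dots> = x i * (\<Sum>k\<in>UNIV. A$j$k * y k) + y i * (\<Sum>k\<in>UNIV. A$j$k * x k)"
        by (simp add: sum_distrib_left symA[of _ j] sum.distrib[symmetric] algebra_simps)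
      finally show ?thesis using Ax Ay by simp
    qed
    ultimately show ?thesis by (simp add: vec_eq_iff)
  qed
  ultimately have "X = 0" using ssp unfolding SSP_def by blast
  moreover have "X $ i0 $ j0 \<noteq> 0"
  proof -
    have "y i0 = 0" using xy[of i0] x0 by simp
    then show ?thesis using x0 y0 by (simp add: X_def)
  qed
  ultimately show False by simp
qed


definition closed_set :: "('n::finite \<Rightarrow> 'n \<Rightarrow> bool) \<Rightarrow> 'n set \<Rightarrow> 'n set \<Rightarrow> bool" where
  "closed_set E S C \<longleftrightarrow> C \<inter> S = {} \<and> (\<forall>w\<in>C. \<forall>z. E w z \<longrightarrow> z \<in> C \<or> z \<in> S)"

definition mkA :: "('n::finite \<Rightarrow> 'n \<Rightarrow> bool) \<Rightarrow> 'n set \<Rightarrow> real^'n^'n" where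
  "mkA E S = (\<chi> i j. if i = j then - real (card {z. E i z \<and> z \<notin> S}) else if E i j then 1 else 0)"

definition indv :: "'n set \<Rightarrow> 'n set \<Rightarrow> 'n \<Rightarrow> real" where
  "indv C1 C2 = (\<lambda>k. if k \<in> C1 then 1 else if k \<in> C2 then -1 else 0)"

lemma mkA_S: "simple_graph E \<Longrightarrow> mkA E S \<in> S_graph E"
  unfolding S_graph_def symmetric_mat_def mkA_def transpose_def simple_graph_def
  by (auto simp: vec_eq_iff)

lemma mkA_mult:
  assumes sg: "simple_graph E"
  shows "(\<Sum>k\<in>UNIV. mkA E S $ i $ k * f k)
     = - real (card {z. E i z \<and> z \<notin> S}) * f i + (\<Sum>k\<in>{k. E i k}. f k)"
proof -
  have nii: "\<not> E i i" using sg unfolding simple_graph_def by auto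
  have "(\<Sum>k\<in>UNIV. mkA E S $ i $ k * f k)
     = (\<Sum>k\<in>UNIV. (if i = k then - real (card {z. E i z \<and> z \<notin> S}) * f k else 0)
                 + (if E i k then f k else 0))"
    by (rule sum.cong) (auto simp: mkA_def nii)
  also have "\<dots> = - real (card {z. E i z \<and> z \<notin> S}) * f i + (\<Sum>k\<in>UNIV. if E i k then f k else 0)"
    by (simp add: sum.distrib)
  also have "(\<Sum>k\<in>UNIV. if E i k then f k else 0) = (\<Sum>k\<in>{k. E i k}. f k)"
    by (simp add: sum.inter_filter[symmetric])
  finally show ?thesis .
qed

lemma sum_if1:
  fixes E :: "'n::finite \<Rightarrow> 'n \<Rightarrow> bool"
  shows   "(\<Sum>k\<in>{k. E w k}. if k \<in> C then 1 else (0::real)) = real (card {z. E w z \<and> z \<in> C})"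
proof -
  have "(\<Sum>k\<in>{k. E w k}. if k \<in> C then 1 else (0::real)) = (\<Sum>k\<in>{x\<in>{k. E w k}. x \<in> C}. (1::real))"
    by (rule sum.inter_filter[symmetric]) simp
  also have "{x\<in>{k. E w k}. x \<in> C} = {z. E w z \<and> z \<in> C}" by auto
  finally show ?thesis by simp
qed

lemma sum_ind:
  fixes E :: "'n::finite \<Rightarrow> 'n \<Rightarrow> bool"
  assumes "C1 \<inter> C2 = {}"
  shows "(\<Sum>k\<in>{k. E w k}. indv C1 C2 k)
     = real (card {z. E w z \<and> z \<in> C1}) - real (card {z. E w z \<and> z \<in> C2})"
proof -
  have "(\<Sum>k\<in>{k. E w k}. indv C1 C2 k)
     = (\<Sum>k\<in>{k. E w k}. (if k \<in> C1 then 1 else 0) - (if k \<in> C2 then 1 else (0::real)))"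
    by (rule sum.cong) (use assms in \<open>auto simp: indv_def\<close>)
  also have "\<dots> = (\<Sum>k\<in>{k. E w k}. (if k \<in> C1 then 1 else 0)) - (\<Sum>k\<in>{k. E w k}. (if k \<in> C2 then 1 else (0::real)))"
    by (simp add: sum_subtractf)
  also have "\<dots> = real (card {z. E w z \<and> z \<in> C1}) - real (card {z. E w z \<and> z \<in> C2})"
    by (simp only: sum_if1)
  finally show ?thesis .
qed

lemma ind_kernel:
  assumes sg: "simple_graph E" and c1: "closed_set E S C1" and c2: "closed_set E S C2"
    and d: "C1 \<inter> C2 = {}"
    and eq: "\<forall>s\<in>S. card {z. E s z \<and> z \<in> C1} = card {z. E s z \<and> z \<in> C2}"
  shows "(\<Sum>k\<in>UNIV. mkA E S $ i $ k * indv C1 C2 k) = 0"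
proof -
  have sym: "E p q \<Longrightarrow> E q p" for p q using sg unfolding simple_graph_def by auto
  have key: "(\<Sum>k\<in>UNIV. mkA E S $ i $ k * indv C1 C2 k)
    = - real (card {z. E i z \<and> z \<notin> S}) * indv C1 C2 i
      + real (card {z. E i z \<and> z \<in> C1}) - real (card {z. E i z \<and> z \<in> C2})"
    using mkA_mult[OF sg] sum_ind[OF d] by simp
  consider "i \<in> S" | "i \<in> C1" | "i \<in> C2" | "i \<notin> S" "i \<notin> C1" "i \<notin> C2" by blast
  then show ?thesis
  proof cases
    case 1
    then have "i \<notin> C1" "i \<notin> C2" using c1 c2 unfolding closed_set_def by auto
    then show ?thesis using key eq 1 by (simp add: indv_def)
  next
    case 2
    have "{z. E i z \<and> z \<in> C1} = {z. E i z \<and> z \<notin> S}" using c1 2 unfolding closed_set_def by blast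
    moreover have "{z. E i z \<and> z \<in> C2} = {}" using c1 c2 d 2 unfolding closed_set_def by blast
    ultimately show ?thesis using key 2 by (simp add: indv_def)
  next
    case 3
    have "{z. E i z \<and> z \<in> C2} = {z. E i z \<and> z \<notin> S}" using c2 3 unfolding closed_set_def by blast
    moreover have "{z. E i z \<and> z \<in> C1} = {}" using c1 c2 d 3 unfolding closed_set_def by blast
    ultimately show ?thesis using key 3 d by (auto simp: indv_def)
  next
    case 4
    have e1: "{z. E i z \<and> z \<in> C1} = {}" using c1 4 sym unfolding closed_set_def by blast
    have e2: "{z. E i z \<and> z \<in> C2} = {}" using c2 4 sym unfolding closed_set_def by blast
    have "indv C1 C2 i = 0" using 4 by (simp add: indv_def)
    then show ?thesis using key by (simp only: e1 e2)
  qed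
qed

lemma construct:
  assumes sg: "simple_graph E"
    and c1: "closed_set E S C1" and c2: "closed_set E S C2"
    and c3: "closed_set E S C3" and c4: "closed_set E S C4"
    and d12: "C1 \<inter> C2 = {}" and d34: "C3 \<inter> C4 = {}"
    and d: "(C1 \<union> C2) \<inter> (C3 \<union> C4) = {}"
    and n1: "a \<in> C1" and n3: "c \<in> C3"
    and eq12: "\<forall>s\<in>S. card {z. E s z \<and> z \<in> C1} = card {z. E s z \<and> z \<in> C2}"
    and eq34: "\<forall>s\<in>S. card {z. E s z \<and> z \<in> C3} = card {z. E s z \<and> z \<in> C4}"
  shows "\<not> in_G_SSP E"
proof -
  have "\<not> SSP (mkA E S)"
  proof (rule core[OF mkA_S[OF sg] sg])
    show "(\<Sum>k\<in>UNIV. mkA E S $ i $ k * indv C1 C2 k) = 0" for i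
      by (rule ind_kernel[OF sg c1 c2 d12 eq12])
    show "(\<Sum>k\<in>UNIV. mkA E S $ i $ k * indv C3 C4 k) = 0" for i
      by (rule ind_kernel[OF sg c3 c4 d34 eq34])
    show "indv C1 C2 i * indv C3 C4 i = 0" for i
      using d by (auto simp: indv_def)
    show "indv C1 C2 i * indv C3 C4 j = 0" if "E i j" for i j
    proof (cases "i \<in> C1 \<union> C2 \<and> j \<in> C3 \<union> C4")
      case True
      then have "j \<in> C1 \<or> j \<in> C2 \<or> j \<in> S" using that c1 c2 unfolding closed_set_def by blast
      then show ?thesis using True d c3 c4 unfolding closed_set_def by blast
    next
      case False then show ?thesis by (auto simp: indv_def)
    qed
    show "indv C1 C2 a \<noteq> 0" using n1 by (simp add: indv_def)
    show "indv C3 C4 c \<noteq> 0" using n3 by (simp add: indv_def)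
  qed
  then show ?thesis unfolding in_G_SSP_def using mkA_S[OF sg] by blast
qed


lemma comp_props:
  assumes T: "is_tree E" and sa: "E s a" and nt: "\<not> Rr E s a t"
  shows "closed_set E {s, t} {w. Rr E s a w}"
    and "{z. E s z \<and> z \<in> {w. Rr E s a w}} = {a}"
    and "t \<noteq> s \<Longrightarrow> {z. E t z \<and> z \<in> {w. Rr E s a w}} = {}"
    and "a \<in> {w. Rr E s a w}"
proof -
  have sg: "simple_graph E" using T unfolding is_tree_def by auto
  have as: "a \<noteq> s" using sa sg unfolding simple_graph_def by auto
  show "closed_set E {s, t} {w. Rr E s a w}"
    unfolding closed_set_def
  proof (intro conjI ballI allI impI)
    have "\<not> Rr E s a s" using Rr_not_s as by blast
    then show "{w. Rr E s a w} \<inter> {s, t} = {}" using nt by blast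
  next
    fix w z assume w: "w \<in> {w. Rr E s a w}" and e: "E w z"
    show "z \<in> {w. Rr E s a w} \<or> z \<in> {s, t}"
    proof (cases "z = s")
      case False
      have "w \<noteq> s" using w Rr_not_s[OF _ as] by auto
      have "Rr E s a w" using w by simp
      then have "Rr E s a z" by (rule Rr_step[of E s a w z, OF _ e \<open>w \<noteq> s\<close> False])
      then show ?thesis by simp
    qed simp
  qed
  show "{z. E s z \<and> z \<in> {w. Rr E s a w}} = {a}"
    proof
    show "{z. E s z \<and> z \<in> {w. Rr E s a w}} \<subseteq> {a}" using no_path[OF T sa] by blast
    show "{a} \<subseteq> {z. E s z \<and> z \<in> {w. Rr E s a w}}" using sa Rr_refl by blast
  qed
  show "t \<noteq> s \<Longrightarrow> {z. E t z \<and> z \<in> {w. Rr E s a w}} = {}"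
  proof (rule ccontr)
    assume ts: "t \<noteq> s" and "{z. E t z \<and> z \<in> {w. Rr E s a w}} \<noteq> {}"
    then obtain z where z: "E t z" "Rr E s a z" by auto
    have "z \<noteq> s" using z Rr_not_s[OF _ as] by auto
    moreover have "E z t" using z sg unfolding simple_graph_def by auto
    ultimately have "Rr E s a t" using Rr_step[of E s a z t, OF z(2) _ _ ts] by blast
    then show False using nt by simp
  qed
  show "a \<in> {w. Rr E s a w}" using Rr_refl by simp
qed


lemma same_s:
  assumes T: "is_tree E" and "E s a" "E s b" "a \<noteq> b"
  shows "{w. Rr E s a w} \<inter> {w. Rr E s b w} = {}"
proof (rule ccontr)
  have sg: "simple_graph E" using T unfolding is_tree_def by auto
  have n: "\<not> Rr E s a b" using no_path[OF assms] .
  assume "{w. Rr E s a w} \<inter> {w. Rr E s b w} \<noteq> {}"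
  then obtain w where w1: "Rr E s a w" and w2: "Rr E s b w" by auto
  have "Rr E s w b" using Rr_sym[OF sg w2] .
  then have "Rr E s a b" using Rr_trans[OF w1] by blast
  then show False using n by simp
qed

lemma cross:
  assumes T: "is_tree E" and uv: "u \<noteq> v" and ua: "E u a" and vc: "E v c"
    and n1: "\<not> Rr E u a v" and n2: "\<not> Rr E v c u"
  shows "{w. Rr E u a w} \<inter> {w. Rr E v c w} = {}"
proof (rule ccontr)
  have sg: "simple_graph E" using T unfolding is_tree_def by auto
  assume "{w. Rr E u a w} \<inter> {w. Rr E v c w} \<noteq> {}"
  then obtain w where w1: "Rr E u a w" and w2: "Rr E v c w" by auto
  have "Rr E u c w" using Rr_transfer[OF w2 n2] .
  then have "Rr E u w c" by (rule Rr_sym[OF sg])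
  then have "Rr E u a c" using Rr_trans[OF w1] by blast
  moreover have "c \<noteq> u" using n2 Rr_refl[of E v c] by auto
  moreover have "E c v" using vc sg unfolding simple_graph_def by auto
  ultimately have "Rr E u a v" using Rr_step[of E u a c v] uv by blast
  then show False using n1 by simp
qed

lemma pick:
  assumes "finite A" "card A \<ge> Suc n"
  obtains a where "a \<in> A" "card (A - {a}) \<ge> n"
proof -
  have "A \<noteq> {}" using assms by auto
  then obtain a where a: "a \<in> A" by auto
  have "card (A - {a}) = card A - 1" using a assms(1) by simp
  also have "n \<le> card A - 1" using assms(2) by simp
  finally show ?thesis using that[OF a] by simp
qed

lemma good_two:
  fixes E :: "'n::finite \<Rightarrow> 'n \<Rightarrow> bool"
  assumes T: "is_tree E" and d: "degree E u \<ge> 3"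
  obtains a b where "E u a" "E u b" "a \<noteq> b" "\<not> Rr E u a v" "\<not> Rr E u b v"
proof -
  have sg: "simple_graph E" using T unfolding is_tree_def by auto
  define G where "G = {z. E u z \<and> \<not> Rr E u z v}"
  define B where "B = {z. E u z \<and> Rr E u z v}"
  have cB: "card B \<le> Suc 0"
  proof (subst card_le_Suc0_iff_eq, simp, intro ballI)
    fix z1 z2 assume "z1 \<in> B" "z2 \<in> B"
    then have "E u z1" "E u z2" "Rr E u z1 v" "Rr E u z2 v" unfolding B_def by auto
    have "Rr E u v z2" using Rr_sym[OF sg \<open>Rr E u z2 v\<close>] .
    then have "Rr E u z1 z2" using Rr_trans[OF \<open>Rr E u z1 v\<close>] by blast
    then show "z1 = z2" using no_path[OF T \<open>E u z1\<close> \<open>E u z2\<close>] by auto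
  qed
  have "{z. E u z} \<subseteq> G \<union> B" unfolding G_def B_def by auto
  then have "card {z. E u z} \<le> card (G \<union> B)" by (rule card_mono[rotated]) simp
  also have "\<dots> \<le> card G + card B" by (rule card_Un_le)
  finally have "card {z. E u z} \<le> card G + card B" .
  with cB have "card G \<ge> Suc (Suc 0)" using d unfolding degree_def by simp
  then obtain a where a: "a \<in> G" "card (G - {a}) \<ge> Suc 0"
    using pick[of G "Suc 0"] by (metis finite)
  then obtain b where b: "b \<in> G - {a}" using pick[of "G - {a}" 0] by (metis finite)
  show ?thesis using that a b unfolding G_def by auto
qed

theorem corollary2p8:
  fixes E :: "'n::finite \<Rightarrow> 'n \<Rightarrow> bool"
  assumes "is_tree E"
    and "(\<exists>v. degree E v \<ge> 4) \<or> (\<exists>u v. u \<noteq> v \<and> degree E u \<ge> 3 \<and> degree E v \<ge> 3)"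
  shows "\<not> in_G_SSP E"
proof -
  have T: "is_tree E" by fact
  have sg: "simple_graph E" using T unfolding is_tree_def by auto
  from assms(2) show ?thesis
  proof
    assume "\<exists>v. degree E v \<ge> 4"
    then obtain v where dv: "card {z. E v z} \<ge> Suc (Suc (Suc (Suc 0)))"
      unfolding degree_def by (auto simp: numeral_eq_Suc)
    define N where "N = {z. E v z}"
    obtain a where a: "a \<in> N" "card (N - {a}) \<ge> Suc (Suc (Suc 0))"
      using pick[of N "Suc (Suc (Suc 0))"] dv unfolding N_def by (metis finite)
    obtain b where b: "b \<in> N - {a}" "card (N - {a} - {b}) \<ge> Suc (Suc 0)"
      using pick[of "N - {a}" "Suc (Suc 0)"] a by (metis finite)
    obtain c where c: "c \<in> N - {a} - {b}" "card (N - {a} - {b} - {c}) \<ge> Suc 0"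
      using pick[of "N - {a} - {b}" "Suc 0"] b by (metis finite)
    obtain d where d: "d \<in> N - {a} - {b} - {c}"
      using pick[of "N - {a} - {b} - {c}" 0] c by (metis finite)
    have E: "E v a" "E v b" "E v c" "E v d" using a b c d unfolding N_def by auto
    have dist: "a \<noteq> b" "a \<noteq> c" "a \<noteq> d" "b \<noteq> c" "b \<noteq> d" "c \<noteq> d" using a b c d by auto
    have nv: "\<not> Rr E v x v" if "E v x" for x
    proof -
      have "x \<noteq> v" using that sg unfolding simple_graph_def by auto
      then show ?thesis using Rr_not_s by blast
    qed
    note pa = comp_props[OF T E(1) nv[OF E(1)]]
    note pb = comp_props[OF T E(2) nv[OF E(2)]]
    note pc = comp_props[OF T E(3) nv[OF E(3)]]
    note pd = comp_props[OF T E(4) nv[OF E(4)]]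
    show ?thesis
    proof (rule construct[OF sg pa(1) pb(1) pc(1) pd(1)])
      show "{w. Rr E v a w} \<inter> {w. Rr E v b w} = {}" using same_s[OF T E(1,2) dist(1)] .
      show "{w. Rr E v c w} \<inter> {w. Rr E v d w} = {}" using same_s[OF T E(3,4) dist(6)] .
      show "({w. Rr E v a w} \<union> {w. Rr E v b w}) \<inter> ({w. Rr E v c w} \<union> {w. Rr E v d w}) = {}"
        using same_s[OF T E(1,3) dist(2)] same_s[OF T E(1,4) dist(3)]
          same_s[OF T E(2,3) dist(4)] same_s[OF T E(2,4) dist(5)] by blast
      show "a \<in> {w. Rr E v a w}" by (rule pa(4))
      show "c \<in> {w. Rr E v c w}" by (rule pc(4))
      show "\<forall>s\<in>{v, v}. card {z. E s z \<and> z \<in> {w. Rr E v a w}} = card {z. E s z \<and> z \<in> {w. Rr E v b w}}"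
        using pa(2) pb(2) by simp
      show "\<forall>s\<in>{v, v}. card {z. E s z \<and> z \<in> {w. Rr E v c w}} = card {z. E s z \<and> z \<in> {w. Rr E v d w}}"
        using pc(2) pd(2) by simp
    qed
  next
    assume "\<exists>u v. u \<noteq> v \<and> degree E u \<ge> 3 \<and> degree E v \<ge> 3"
    then obtain u v where uv: "u \<noteq> v" and du: "degree E u \<ge> 3" and dv: "degree E v \<ge> 3" by blast
    obtain a b where ab: "E u a" "E u b" "a \<noteq> b" "\<not> Rr E u a v" "\<not> Rr E u b v"
      using good_two[OF T du] by blast
    obtain c d where cd: "E v c" "E v d" "c \<noteq> d" "\<not> Rr E v c u" "\<not> Rr E v d u"
      using good_two[OF T dv] by blast
    have vu: "v \<noteq> u" using uv by simp
    note pa = comp_props[OF T ab(1) ab(4)]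
    note pb = comp_props[OF T ab(2) ab(5)]
    note pc = comp_props[OF T cd(1) cd(4)]
    note pd = comp_props[OF T cd(2) cd(5)]
    have sw: "{v, u} = {u, v}" by auto
    show ?thesis
    proof (rule construct[OF sg pa(1) pb(1) pc(1)[unfolded sw] pd(1)[unfolded sw]])
      show "{w. Rr E u a w} \<inter> {w. Rr E u b w} = {}" using same_s[OF T ab(1,2,3)] .
      show "{w. Rr E v c w} \<inter> {w. Rr E v d w} = {}" using same_s[OF T cd(1,2,3)] .
      show "({w. Rr E u a w} \<union> {w. Rr E u b w}) \<inter> ({w. Rr E v c w} \<union> {w. Rr E v d w}) = {}"
        using cross[OF T uv ab(1) cd(1) ab(4) cd(4)] cross[OF T uv ab(1) cd(2) ab(4) cd(5)]
          cross[OF T uv ab(2) cd(1) ab(5) cd(4)] cross[OF T uv ab(2) cd(2) ab(5) cd(5)] by blast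
      show "a \<in> {w. Rr E u a w}" by (rule pa(4))
      show "c \<in> {w. Rr E v c w}" by (rule pc(4))
      show "\<forall>s\<in>{u, v}. card {z. E s z \<and> z \<in> {w. Rr E u a w}} = card {z. E s z \<and> z \<in> {w. Rr E u b w}}"
      proof (intro ballI)
        fix s assume "s \<in> {u, v}"
        then consider "s = u" | "s = v" by blast
        then show "card {z. E s z \<and> z \<in> {w. Rr E u a w}} = card {z. E s z \<and> z \<in> {w. Rr E u b w}}"
        proof cases
          case 1 then show ?thesis using pa(2) pb(2) by simp
        next
          case 2 then show ?thesis by (simp only: pa(3)[OF vu] pb(3)[OF vu])
        qed
      qed
      show "\<forall>s\<in>{u, v}. card {z. E s z \<and> z \<in> {w. Rr E v c w}} = card {z. E s z \<and> z \<in> {w. Rr E v d w}}"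
      proof (intro ballI)
        fix s assume "s \<in> {u, v}"
        then consider "s = v" | "s = u" by blast
        then show "card {z. E s z \<and> z \<in> {w. Rr E v c w}} = card {z. E s z \<and> z \<in> {w. Rr E v d w}}"
        proof cases
          case 1 then show ?thesis using pc(2) pd(2) by simp
        next
          case 2 then show ?thesis by (simp only: pc(3)[OF uv] pd(3)[OF uv])
        qed
      qed
    qed
  qed
qed

end
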